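(* Let $\mathbb{F}$ be a non-Archimedean local field with ring of integers $\mathcal{O}$, let $V$ and $W$ be finite-dimensional $\mathbb{F}$-vector spaces, and let $L\subset V$ be a lattice. Let $F_0\colon W\to V$ be an injective linear map. Then there exists a neighborhood $U$ of $F_0$ in $\mathrm{Hom}_{\mathbb{F}}(W,V)$ such that every $F\in U$ is injective and $$F^{-1}(\mathrm{Im}(F)\cap L)=F_0^{-1}(\mathrm{Im}(F_0)\cap L).$$
   Context: Finite-dimensional $\mathbb{F}$-vector spaces carry their natural (product) topology, and $\mathrm{Hom}_{\mathbb{F}}(W,V)$ is topologized as a finite-dimensional vector space. A lattice in $V$ is a compact open $\mathcal{O}$-submodule of $V$. *)

theory Defs
  imports "HOL-Analysis.Analysis"
begin

definition nonarch_abs :: "('k::field \<Rightarrow> real) \<Rightarrow> bool" where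
  "nonarch_abs nv \<longleftrightarrow>
     (\<forall>x. 0 \<le> nv x) \<and> (\<forall>x. nv x = 0 \<longleftrightarrow> x = 0) \<and>
     (\<forall>x y. nv (x * y) = nv x * nv y) \<and>
     (\<forall>x y. nv (x + y) \<le> max (nv x) (nv y))"

definition field_top :: "('k::field \<Rightarrow> real) \<Rightarrow> 'k topology" where
  "field_top nv = Metric_space.mtopology UNIV (\<lambda>x y. nv (x - y))"

definition nonarch_local_field :: "('k::field \<Rightarrow> real) \<Rightarrow> bool" where
  "nonarch_local_field nv \<longleftrightarrow>
     nonarch_abs nv \<and> (\<exists>x. nv x \<noteq> 0 \<and> nv x \<noteq> 1) \<and>
     locally_compact_space (field_top nv)"

definition int_ring :: "('k::field \<Rightarrow> real) \<Rightarrow> 'k set" where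
  "int_ring nv = {x. nv x \<le> 1}"

text \<open>Finite-dimensional vector spaces are modelled as coordinate spaces
  'n \<Rightarrow> 'k with 'n finite, carrying the product topology.\<close>
definition vec_top :: "('k::field \<Rightarrow> real) \<Rightarrow> ('n \<Rightarrow> 'k) topology" where
  "vec_top nv = product_topology (\<lambda>_. field_top nv) UNIV"

text \<open>Hom(W,V) is modelled by matrices 'n \<Rightarrow> 'm \<Rightarrow> 'k (V = 'n-coordinates,
  W = 'm-coordinates), topologized as a finite-dimensional vector space,
  i.e. with the product topology on the entries.\<close>
definition hom_top :: "('k::field \<Rightarrow> real) \<Rightarrow> ('n \<Rightarrow> 'm \<Rightarrow> 'k) topology" where
  "hom_top nv = product_topology (\<lambda>_. vec_top nv) UNIV"

definition mat_app :: "('n \<Rightarrow> 'm::finite \<Rightarrow> 'k::field) \<Rightarrow> ('m \<Rightarrow> 'k) \<Rightarrow> ('n \<Rightarrow> 'k)" where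
  "mat_app A w = (\<lambda>i. \<Sum>j\<in>UNIV. A i j * w j)"

definition is_lattice :: "('k::field \<Rightarrow> real) \<Rightarrow> ('n \<Rightarrow> 'k) set \<Rightarrow> bool" where
  "is_lattice nv L \<longleftrightarrow>
     (\<lambda>_. 0) \<in> L \<and> (\<forall>u\<in>L. \<forall>v\<in>L. (\<lambda>i. u i + v i) \<in> L) \<and>
     (\<forall>c\<in>int_ring nv. \<forall>v\<in>L. (\<lambda>i. c * v i) \<in> L) \<and>
     compactin (vec_top nv) L \<and> openin (vec_top nv) L"

end

theory Submission
  imports Defs
begin

lemma na_basic:
  assumes "nonarch_abs nv"
  shows "nv 0 = 0" "nv 1 = 1" "nv (-x) = nv x" "nv (x - y) = nv (y - x)"
    "nv (x + y) \<le> max (nv x) (nv y)" "nv (x - y) \<le> max (nv x) (nv y)" "0 \<le> nv x"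
    "nv (x * y) = nv x * nv y" "nv x = 0 \<longleftrightarrow> x = 0"
proof -
  have nn: "\<And>x. 0 \<le> nv x" and z: "\<And>x. nv x = 0 \<longleftrightarrow> x = 0"
    and m: "\<And>x y. nv (x * y) = nv x * nv y" and u: "\<And>x y. nv (x + y) \<le> max (nv x) (nv y)"
    using assms unfolding nonarch_abs_def by auto
  show "nv 0 = 0" using z by simp
  have "nv 1 = nv 1 * nv 1" using m[of 1 1] by simp
  moreover have "nv 1 \<noteq> 0" using z by simp
  ultimately show one: "nv 1 = 1" by simp
  have "nv (-1) * nv (-1) = 1" using m[of "-1" "-1"] one by simp
  then have m1: "nv (-1) = 1" using nn[of "-1"]
    by (metis abs_of_nonneg mult_cancel_right1 real_sqrt_abs2 real_sqrt_mult_self real_sqrt_one)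
  show neg: "\<And>x. nv (-x) = nv x" using m[of "-1"] m1 by simp
  show "nv (x - y) = nv (y - x)" using neg[of "x - y"] by simp
  show "nv (x + y) \<le> max (nv x) (nv y)" by (rule u)
  show "nv (x - y) \<le> max (nv x) (nv y)" using u[of x "-y"] neg[of y] by simp
  show "0 \<le> nv x" "nv (x * y) = nv x * nv y" "nv x = 0 \<longleftrightarrow> x = 0" using nn m z by auto
qed

lemma na_metric:
  assumes "nonarch_abs nv"
  shows "Metric_space UNIV (\<lambda>x y. nv (x - y))"
proof
  fix x y z :: 'a
  show "0 \<le> nv (x - y)" using na_basic[OF assms] by simp
  show "nv (x - y) = nv (y - x)" using na_basic[OF assms] by simp
  show "(nv (x - y) = 0) = (x = y)" using na_basic[OF assms] by simp
  have "nv (x - z) = nv ((x - y) + (y - z))" by simp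
  also have "\<dots> \<le> max (nv (x - y)) (nv (y - z))" using na_basic[OF assms] by blast
  also have "\<dots> \<le> nv (x - y) + nv (y - z)" using na_basic[OF assms] by simp
  finally show "nv (x - z) \<le> nv (x - y) + nv (y - z)" .
qed

lemma na_sum_le:
  assumes "nonarch_abs nv" "finite S" "0 \<le> M" "\<And>i. i \<in> S \<Longrightarrow> nv (f i) \<le> M"
  shows "nv (sum f S) \<le> M"
  using assms(2,4)
proof (induction S rule: finite_induct)
  case empty then show ?case using na_basic(1)[OF assms(1)] assms(3) by simp
next
  case (insert x F)
  then have "nv (sum f (insert x F)) = nv (f x + sum f F)" by simp
  also have "\<dots> \<le> max (nv (f x)) (nv (sum f F))" using na_basic[OF assms(1)] by blast
  also have "\<dots> \<le> M" using insert by auto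
  finally show ?case .
qed

lemma ball_open:
  assumes "nonarch_abs nv"
  shows "openin (field_top nv) {x. nv (x - a) < e}"
proof -
  interpret Metric_space UNIV "\<lambda>x y. nv (x - y)" by (rule na_metric[OF assms])
  have "{x. nv (x - a) < e} = mball a e" using na_basic[OF assms] by (auto simp: mball_def)
  then show ?thesis unfolding field_top_def by simp
qed

lemma lattice_ball:
  fixes L :: "('n::finite \<Rightarrow> 'k::field) set"
  assumes na: "nonarch_abs nv" and "is_lattice nv L"
  shows "\<exists>r>0. \<forall>v. (\<forall>i. nv (v i) < r) \<longrightarrow> v \<in> L"
proof -
  interpret Metric_space UNIV "\<lambda>x y. nv (x - y)" by (rule na_metric[OF na])
  have L0: "(\<lambda>_. 0) \<in> L" and Lo: "openin (vec_top nv) L" using assms(2) unfolding is_lattice_def by auto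
  from Lo L0 obtain U where U: "\<forall>i\<in>UNIV. openin (field_top nv) (U i)" "(\<lambda>_. 0) \<in> Pi\<^sub>E UNIV U"
     "Pi\<^sub>E UNIV U \<subseteq> L"
    unfolding vec_top_def openin_product_topology_alt by blast
  have "\<forall>i. \<exists>r>0. mball 0 r \<subseteq> U i"
  proof
    fix i
    have "openin mtopology (U i)" using U(1) unfolding field_top_def by simp
    moreover have "0 \<in> U i" using U(2) by auto
    ultimately show "\<exists>r>0. mball 0 r \<subseteq> U i" unfolding openin_mtopology by blast
  qed
  then obtain rr where rr: "\<And>i. rr i > 0" "\<And>i. mball 0 (rr i) \<subseteq> U i" by metis
  define r where "r = Min (range rr)"
  have rpos: "r > 0" unfolding r_def using rr(1) by (simp)
  have rle: "\<And>i. r \<le> rr i" unfolding r_def by simp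
  show ?thesis
  proof (intro exI[of _ r] conjI allI impI rpos)
    fix v :: "'n \<Rightarrow> 'k" assume "\<forall>i. nv (v i) < r"
    then have "\<And>i. v i \<in> U i"
    proof -
      fix i
      assume vr: "\<forall>i. nv (v i) < r"
      have "nv (v i) < r" using vr by blast
      then have "nv (0 - v i) < rr i" using rle[of i] na_basic(3)[OF na, of "v i"] by simp
      then have "v i \<in> mball 0 (rr i)" by (simp add: mball_def)
      then show "v i \<in> U i" using rr(2) by blast
    qed
    then have "v \<in> Pi\<^sub>E UNIV U" by auto
    then show "v \<in> L" using U(3) by auto
  qed
qed

lemma lattice_bounded:
  fixes L :: "('n::finite \<Rightarrow> 'k::field) set"
  assumes na: "nonarch_abs nv" and "is_lattice nv L"
  shows "\<exists>R>0. \<forall>v\<in>L. \<forall>i. nv (v i) \<le> R"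
proof -
  interpret Metric_space UNIV "\<lambda>x y. nv (x - y)" by (rule na_metric[OF na])
  have Lc: "compactin (vec_top nv) L" using assms(2) unfolding is_lattice_def by auto
  have "\<forall>i. \<exists>R. \<forall>v\<in>L. nv (v i) \<le> R"
  proof
    fix i :: 'n
    have "compactin (field_top nv) ((\<lambda>v. v i) ` L)"
      using image_compactin[OF Lc[unfolded vec_top_def] continuous_map_product_projection[of i UNIV "\<lambda>_. field_top nv"]]
      by simp
    then have "mbounded ((\<lambda>v. v i) ` L)" unfolding field_top_def by (rule compactin_imp_mbounded)
    then obtain x B where xB: "(\<lambda>v. v i) ` L \<subseteq> mcball x B" unfolding mbounded_def by blast
    show "\<exists>R. \<forall>v\<in>L. nv (v i) \<le> R"
    proof (intro exI ballI)
      fix v assume "v \<in> L"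
      then have "nv (x - v i) \<le> B" using xB by (auto simp: mcball_def)
      moreover have "nv (v i) = nv (x - (x - v i))" by simp
      moreover have "nv (x - (x - v i)) \<le> max (nv x) (nv (x - v i))" using na_basic(6)[OF na] .
      ultimately show "nv (v i) \<le> nv x + B" using na_basic[OF na] by (smt (verit))
    qed
  qed
  then obtain RR where RR: "\<And>i v. v \<in> L \<Longrightarrow> nv (v i) \<le> RR i" by metis
  define R where "R = (\<Sum>i\<in>UNIV. \<bar>RR i\<bar>) + 1"
  have "\<And>i. RR i \<le> R"
  proof -
    fix i
    have "\<bar>RR i\<bar> \<le> (\<Sum>i\<in>UNIV. \<bar>RR i\<bar>)" by (rule member_le_sum) auto
    then show "RR i \<le> R" unfolding R_def by linarith
  qed
  moreover have "R > 0"
  proof -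
    have "0 \<le> (\<Sum>i\<in>UNIV. \<bar>RR i\<bar>)" by (rule sum_nonneg) auto
    then show ?thesis unfolding R_def by linarith
  qed
  ultimately show ?thesis using RR by (meson order_trans)
qed

lemma left_inv:
  fixes F0 :: "'n::finite \<Rightarrow> 'm::finite \<Rightarrow> 'k::field"
  assumes "inj (mat_app F0)"
  shows "\<exists>B :: 'm \<Rightarrow> 'n \<Rightarrow> 'k. \<forall>w j. w j = (\<Sum>i\<in>UNIV. B j i * mat_app F0 w i)"
proof -
  define A :: "'k^'m^'n" where "A = (\<chi> i j. F0 i j)"
  have Av: "\<And>x. A *v x = vec_lambda (mat_app F0 (vec_nth x))"
    by (simp add: A_def matrix_vector_mult_def mat_app_def)
  have "inj ((*v) A)"
  proof (rule injI)
    fix x y assume "A *v x = A *v y"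
    then have "mat_app F0 (vec_nth x) = mat_app F0 (vec_nth y)" unfolding Av
      by (metis vec_lambda_inverse UNIV_I)
    then have "vec_nth x = vec_nth y" using assms by (simp add: inj_eq)
    then show "x = y" by (simp add: vec_nth_inject)
  qed
  then obtain B :: "'k^'n^'m" where B: "B ** A = mat 1" using matrix_left_invertible_injective by blast
  show ?thesis
  proof (intro exI[of _ "\<lambda>j i. B $ j $ i"] allI)
    fix w :: "'m \<Rightarrow> 'k" and j
    have "vec_lambda w = B *v (A *v vec_lambda w)" by (simp add: matrix_vector_mul_assoc B)
    then have "vec_lambda w $ j = (B *v (A *v vec_lambda w)) $ j" by simp
    then show "w j = (\<Sum>i\<in>UNIV. B $ j $ i * mat_app F0 w i)"
      by (simp add: Av matrix_vector_mult_def A_def mat_app_def)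
  qed
qed

lemma U_open:
  assumes na: "nonarch_abs nv"
  shows "openin (hom_top nv) (PiE UNIV (\<lambda>i. PiE UNIV (\<lambda>j. {x. nv (x - (F0::'n::finite \<Rightarrow> 'm::finite \<Rightarrow> 'k::field) i j) < d})))"
  unfolding hom_top_def vec_top_def
  by (auto simp: openin_PiE_gen ball_open[OF na])

lemma mat_app_diff: "mat_app F w i - mat_app G w i = (\<Sum>j\<in>UNIV. (F i j - G i j) * w j)"
  by (simp add: mat_app_def sum_subtractf left_diff_distrib)

lemma mat_app_diff2: "mat_app F w i - mat_app F w' i = mat_app F (\<lambda>j. w j - w' j) i"
  by (simp add: mat_app_def sum_subtractf right_diff_distrib)

theorem proposition4p7:
  fixes nv :: "'k::field \<Rightarrow> real"
    and L :: "('n::finite \<Rightarrow> 'k) set"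
    and F0 :: "'n \<Rightarrow> 'm::finite \<Rightarrow> 'k"
  assumes "nonarch_local_field nv"
    and "is_lattice nv L"
    and "inj (mat_app F0)"
  shows "\<exists>U. openin (hom_top nv) U \<and> F0 \<in> U \<and>
           (\<forall>F\<in>U. inj (mat_app F) \<and>
              mat_app F -` (range (mat_app F) \<inter> L) =
              mat_app F0 -` (range (mat_app F0) \<inter> L))"
proof -
  have na: "nonarch_abs nv" using assms(1) unfolding nonarch_local_field_def by blast
  note nb = na_basic[OF na]
  have Ladd: "\<And>u v. u \<in> L \<Longrightarrow> v \<in> L \<Longrightarrow> (\<lambda>i. u i + v i) \<in> L"
    using assms(2) unfolding is_lattice_def by blast
  obtain r where r: "r > 0" "\<And>v. (\<forall>i. nv (v i) < r) \<Longrightarrow> v \<in> L"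
    using lattice_ball[OF na assms(2)] by blast
  obtain R where R: "R > 0" "\<And>v i. v \<in> L \<Longrightarrow> nv (v i) \<le> R"
    using lattice_bounded[OF na assms(2)] by blast
  obtain B :: "'m \<Rightarrow> 'n \<Rightarrow> 'k" where B: "\<And>w j. w j = (\<Sum>i\<in>UNIV. B j i * mat_app F0 w i)"
    using left_inv[OF assms(3)] by blast
  define C where "C = (\<Sum>p\<in>UNIV. nv (B (fst p) (snd p))) + 1"
  have CB: "\<And>j i. nv (B j i) \<le> C"
  proof -
    fix j i
    have "nv (B (fst (j,i)) (snd (j,i))) \<le> (\<Sum>p\<in>UNIV. nv (B (fst p) (snd p)))"
      by (rule member_le_sum) (auto simp: nb)
    then show "nv (B j i) \<le> C" unfolding C_def by simp
  qed
  have Cpos: "C > 0"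
  proof -
    have "0 \<le> (\<Sum>p\<in>UNIV. nv (B (fst p) (snd p)))" by (rule sum_nonneg) (auto simp: nb)
    then show ?thesis unfolding C_def by linarith
  qed
  have bound0: "nv (w j) \<le> C * t" if "0 \<le> t" "\<And>i. nv (mat_app F0 w i) \<le> t" for w j t
  proof -
    have "nv (\<Sum>i\<in>UNIV. B j i * mat_app F0 w i) \<le> C * t"
    proof (rule na_sum_le[OF na])
      show "0 \<le> C * t" using Cpos that(1) by simp
      fix i
      show "nv (B j i * mat_app F0 w i) \<le> C * t"
        using mult_mono[OF CB[of j i] that(2)[of i]] Cpos by (simp add: nb)
    qed auto
    then show ?thesis using B[of w j] by simp
  qed
  define d where "d = min (1 / (2 * C)) (r / (2 * C * R))"
  have dpos: "d > 0" unfolding d_def using Cpos r R by simp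
  have Cd: "C * d \<le> 1/2"
  proof -
    have "d \<le> 1 / (2 * C)" unfolding d_def by simp
    then show ?thesis using Cpos by (simp add: field_simps)
  qed
  have CdR: "d * (C * R) < r"
  proof -
    have "d \<le> r / (2 * C * R)" unfolding d_def by simp
    moreover have "0 \<le> C * R" using Cpos R by simp
    ultimately have "d * (C * R) \<le> r / (2 * C * R) * (C * R)" by (rule mult_right_mono)
    also have "\<dots> = r / 2" using Cpos R by (simp add: field_simps)
    finally show ?thesis using r by simp
  qed
  define U where "U = PiE UNIV (\<lambda>i. PiE UNIV (\<lambda>j. {x. nv (x - F0 i j) < d}))"
  have memU: "F \<in> U \<longleftrightarrow> (\<forall>i j. nv (F i j - F0 i j) < d)" for F
    unfolding U_def by (auto simp: PiE_UNIV_domain)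
  have diffb: "nv (mat_app F w i - mat_app F0 w i) \<le> d * s"
    if "F \<in> U" "0 \<le> s" "\<And>j. nv (w j) \<le> s" for F w i s
  proof -
    have "nv (\<Sum>j\<in>UNIV. (F i j - F0 i j) * w j) \<le> d * s"
    proof (rule na_sum_le[OF na])
      show "0 \<le> d * s" using dpos that(2) by simp
      fix j
      have "nv (F i j - F0 i j) \<le> d" using that(1) memU by (simp add: less_imp_le)
      then show "nv ((F i j - F0 i j) * w j) \<le> d * s"
        using mult_mono[OF _ that(3)[of j]] dpos by (simp add: nb)
    qed auto
    then show ?thesis by (simp add: mat_app_diff)
  qed
  have key: "nv (w j) \<le> C * t"
    if F: "F \<in> U" and t: "0 \<le> t" "\<And>i. nv (mat_app F w i) \<le> t" for F w t j
  proof -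
    define s where "s = Max (range (\<lambda>j. nv (w j)))"
    have sge: "\<And>j. nv (w j) \<le> s" unfolding s_def by simp
    have s0: "0 \<le> s" using sge[of j] nb(7)[of "w j"] by linarith
    have "s \<in> range (\<lambda>j. nv (w j))" unfolding s_def by (rule Max_in) auto
    then obtain j0 where j0: "s = nv (w j0)" by blast
    have F0b: "nv (mat_app F0 w i) \<le> max t (d * s)" for i
    proof -
      have "nv (mat_app F0 w i) = nv (mat_app F w i - (mat_app F w i - mat_app F0 w i))" by simp
      also have "\<dots> \<le> max (nv (mat_app F w i)) (nv (mat_app F w i - mat_app F0 w i))" by (rule nb(6))
      also have "\<dots> \<le> max t (d * s)"
      proof (rule max.mono)
        show "nv (mat_app F w i) \<le> t" by (rule t(2))
        show "nv (mat_app F w i - mat_app F0 w i) \<le> d * s" using diffb[of F s w i] F s0 sge by blast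
      qed
      finally show ?thesis .
    qed
    have "s \<le> C * max t (d * s)" using bound0[OF _ F0b, of j0] j0 t(1) dpos s0 by simp
    then have "s \<le> C * t"
    proof (cases "t \<le> d * s")
      case True
      assume "s \<le> C * max t (d * s)"
      then have "s \<le> (C * d) * s" using True by (simp add: max_def)
      also have "\<dots> \<le> s / 2" using Cd s0 mult_right_mono[OF Cd s0] by simp
      finally have "s \<le> 0" by simp
      then show ?thesis using Cpos t(1) by (smt (verit) mult_nonneg_nonneg)
    next
      case False
      assume "s \<le> C * max t (d * s)"
      then show ?thesis using False by (simp add: max_def)
    qed
    then show ?thesis using sge[of j] by simp
  qed
  show ?thesis
  proof (intro exI[of _ U] conjI ballI)
    show "openin (hom_top nv) U" unfolding U_def by (rule U_open[OF na])
    show "F0 \<in> U" using memU dpos by (simp add: nb(1))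
  next
    fix F assume F: "F \<in> U"
    show "inj (mat_app F)"
    proof (rule injI)
      fix w w' assume eq: "mat_app F w = mat_app F w'"
      have "nv (mat_app F (\<lambda>j. w j - w' j) i) \<le> 0" for i
        using eq mat_app_diff2[of F w i w'] nb(1) by simp
      then have "nv (w j - w' j) \<le> 0" for j using key[OF F, of 0 "\<lambda>j. w j - w' j" j] by simp
      then have "w j = w' j" for j using nb(7)[of "w j - w' j"] nb(9)[of "w j - w' j"] by (meson order_antisym right_minus_eq)
      then show "w = w'" by blast
    qed
    have equiv: "mat_app F w \<in> L \<longleftrightarrow> mat_app F0 w \<in> L" for w
    proof
      assume FL: "mat_app F w \<in> L"
      have "nv (w j) \<le> C * R" for j using key[OF F, of R w j] R FL by simp
      then have "nv (mat_app F w i - mat_app F0 w i) \<le> d * (C * R)" for i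
        using diffb[OF F, of "C * R" w i] Cpos R by simp
      then have "\<forall>i. nv (mat_app F0 w i - mat_app F w i) < r"
        using CdR nb(4) by (metis le_less_trans)
      then have "(\<lambda>i. mat_app F0 w i - mat_app F w i) \<in> L" by (rule r(2))
      from Ladd[OF FL this] show "mat_app F0 w \<in> L" by simp
    next
      assume FL: "mat_app F0 w \<in> L"
      have "nv (w j) \<le> C * R" for j using bound0[of R w j] R FL by simp
      then have "nv (mat_app F w i - mat_app F0 w i) \<le> d * (C * R)" for i
        using diffb[OF F, of "C * R" w i] Cpos R by simp
      then have "\<forall>i. nv (mat_app F w i - mat_app F0 w i) < r"
        using CdR by (metis le_less_trans)
      then have "(\<lambda>i. mat_app F w i - mat_app F0 w i) \<in> L" by (rule r(2))
      from Ladd[OF FL this] show "mat_app F w \<in> L" by simp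
    qed
    show "mat_app F -` (range (mat_app F) \<inter> L) = mat_app F0 -` (range (mat_app F0) \<inter> L)"
      using equiv by auto
  qed
qed

end
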